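(* Let $p\ge 2$ and let $J$ be a periodic Jacobi operator on $\ell^2(\mathbb{Z})$ with period $p$, given by $(J\psi)_n=a_{n-1}\psi_{n-1}+b_n\psi_n+a_n\psi_{n+1}$, where $a_n>0$, $b_n\in\mathbb{R}$, $a_{n+p}=a_n$, $b_{n+p}=b_n$ for all $n$. Let $A:=(a_1\cdots a_p)^{1/p}$, and let $\sigma_n$ ($1\le n\le p$) and $\gamma_n$ ($1\le n\le p-1$) be the spectral bands and gaps of $J$. If $d>0$ satisfies $\min_{1\le n\le p-1}|\gamma_n|\ge d$, then $$\frac{1}{\log^+(d/A)}\ge\sum_{n=1}^{p}\frac{1}{\log^+\big(4d/|\sigma_n|\big)}.$$
   Context: $\log^+x:=\max\{\log x,0\}$, with the convention $1/0=+\infty$. Spectral structure: the spectrum of $J$ is $\sigma(J)=\{\lambda\in\mathbb{R}: |\Delta(\lambda)|\le 2\}$, where $\Delta(\lambda)=\operatorname{tr}\big(A_p(\lambda)A_{p-1}(\lambda)\cdots A_1(\lambda)\big)$ with $A_n(\lambda)=\begin{pmatrix}(\lambda-b_n)/a_n & -a_{n-1}/a_n\\ 1&0\end{pmatrix}$ (the discriminant, a real polynomial of degree $p$). It is a standard fact that this set is a union of $p$ closed intervals (bands) $\sigma_n=[\lambda_n^{\min},\lambda_n^{\max}]$, $1\le n\le p$, with $\lambda_n^{\min}<\lambda_n^{\max}\le\lambda_{n+1}^{\min}$ (bands may touch but do not overlap); on each band $\Delta$ is monotone and maps it onto $[-2,2]$. The spectral gaps are $\gamma_n=(\lambda_n^{\max},\lambda_{n+1}^{\min})$,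 $1\le n\le p-1$ (possibly empty). $|\cdot|$ denotes Lebesgue measure (length). *)

theory Defs
  imports "HOL-Analysis.Analysis"
begin

text \<open>One-step transfer matrix A_n(lambda) of the Jacobi operator with
  off-diagonal coefficients a and diagonal coefficients b (indexed by int).\<close>
definition transfer_matrix :: "(int \<Rightarrow> real) \<Rightarrow> (int \<Rightarrow> real) \<Rightarrow> int \<Rightarrow> real \<Rightarrow> real^2^2" where
  "transfer_matrix a b n lam =
     vector [vector [(lam - b n) / a n, - a (n - 1) / a n], vector [1, 0]]"

fun transfer_prod :: "(int \<Rightarrow> real) \<Rightarrow> (int \<Rightarrow> real) \<Rightarrow> nat \<Rightarrow> real \<Rightarrow> real^2^2" where
  "transfer_prod a b 0 lam = mat 1"
| "transfer_prod a b (Suc k) lam = transfer_matrix a b (int (Suc k)) lam ** transfer_prod a b k lam"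

definition trace2 :: "real^2^2 \<Rightarrow> real" where
  "trace2 M = (\<Sum>i\<in>UNIV. M $ i $ i)"

definition discriminant :: "(int \<Rightarrow> real) \<Rightarrow> (int \<Rightarrow> real) \<Rightarrow> nat \<Rightarrow> real \<Rightarrow> real" where
  "discriminant a b p lam = trace2 (transfer_prod a b p lam)"

definition jacobi_spectrum :: "(int \<Rightarrow> real) \<Rightarrow> (int \<Rightarrow> real) \<Rightarrow> nat \<Rightarrow> real set" where
  "jacobi_spectrum a b p = {lam. \<bar>discriminant a b p lam\<bar> \<le> 2}"

text \<open>The band decomposition: lmin n, lmax n (1 <= n <= p) are the endpoints of
  the bands sigma_n = [lmin n, lmax n], which are ordered, may touch but not overlap,
  cover the spectrum, and on each of which Delta is monotone onto [-2,2].\<close>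
definition is_band_decomposition ::
  "(int \<Rightarrow> real) \<Rightarrow> (int \<Rightarrow> real) \<Rightarrow> nat \<Rightarrow> (nat \<Rightarrow> real) \<Rightarrow> (nat \<Rightarrow> real) \<Rightarrow> bool" where
  "is_band_decomposition a b p lmin lmax \<longleftrightarrow>
     jacobi_spectrum a b p = (\<Union>n\<in>{1..p}. {lmin n..lmax n}) \<and>
     (\<forall>n\<in>{1..p}. lmin n < lmax n) \<and>
     (\<forall>n\<in>{1..<p}. lmax n \<le> lmin (Suc n)) \<and>
     (\<forall>n\<in>{1..p}. (mono_on {lmin n..lmax n} (discriminant a b p)
                     \<or> antimono_on {lmin n..lmax n} (discriminant a b p))
                   \<and> discriminant a b p ` {lmin n..lmax n} = {-2..2})"

text \<open>1 / log^+ x, with log^+ x = max (log x) 0 and the convention 1/0 = +infinity.\<close>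
definition inv_logplus :: "real \<Rightarrow> ereal" where
  "inv_logplus x = (if max (ln x) 0 = 0 then \<infinity> else ereal (1 / max (ln x) 0))"

end

theory Submission
  imports Defs "HOL-Computational_Algebra.Polynomial"
begin

lemma factor_roots:
  fixes q :: "real poly" and R :: "real set"
  assumes "finite R" "\<forall>r\<in>R. poly q r = 0"
  shows "\<exists>s. q = (\<Prod>r\<in>R. [:-r,1:]) * s"
  using assms
proof (induction R rule: finite_induct)
  case empty then show ?case by simp
next
  case (insert r R)
  then obtain s where s: "q = (\<Prod>r\<in>R. [:-r,1:]) * s" by auto
  have "poly (\<Prod>r\<in>R. [:-r,1:]) r \<noteq> 0"
    using insert(1,2) by (auto simp: poly_prod)
  moreover have "poly q r = 0" using insert by auto
  ultimately have "poly s r = 0" using s by simp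
  then have "[:-r,1:] dvd s" by (simp add: dvd_iff_poly_eq_0)
  then obtain s' where s': "s = [:-r,1:] * s'" by (erule dvdE)
  have "q = (\<Prod>r\<in>insert r R. [:-r,1:]) * s'"
  proof -
    have "(\<Prod>r\<in>insert r R. [:-r,1:]) = [:-r,1:] * (\<Prod>r\<in>R. [:-r,1::real:])"
      using insert(1,2) by simp
    then show ?thesis using s s' by (simp only: mult.assoc mult.left_commute)
  qed
  then show ?case by blast
qed

lemma factor_full:
  fixes q :: "real poly" and R :: "real set"
  assumes "finite R" "\<forall>r\<in>R. poly q r = 0" "card R = degree q" "q \<noteq> 0"
  shows "poly q x = lead_coeff q * (\<Prod>r\<in>R. x - r)"
proof -
  obtain s where s: "q = (\<Prod>r\<in>R. [:-r,1:]) * s" using factor_roots assms by blast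
  define P where "P = (\<Prod>r\<in>R. [:-r,1::real:])"
  have P0: "P \<noteq> 0" unfolding P_def by (simp add: prod_zero_iff[OF assms(1)])
  have dP: "degree P = card R" unfolding P_def
    by (subst degree_prod_eq_sum_degree) auto
  have lP: "lead_coeff P = 1" unfolding P_def by (simp add: lead_coeff_prod)
  have s0: "s \<noteq> 0" using s assms(4) by auto
  have "degree q = degree P + degree s" using s P0 s0 by (simp add: P_def degree_mult_eq)
  then have "degree s = 0" using dP assms(3) by simp
  then obtain c where c: "s = [:c:]" by (metis degree_eq_zeroE)
  have "lead_coeff q = c" using s lP c by (simp only: P_def[symmetric] lead_coeff_mult) simp
  then show ?thesis using s c by (simp add: poly_prod)
qed

lemma mm_entries:
  fixes M T :: "real^2^2"
  shows "(M ** T) $ i $ j = M $ i $ 1 * T $ 1 $ j + M $ i $ 2 * T $ 2 $ j"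
  by (simp add: matrix_matrix_mult_def sum_2)

lemma tm_entries:
  "transfer_matrix a b n lam $ 1 $ 1 = (lam - b n) / a n"
  "transfer_matrix a b n lam $ 1 $ 2 = - a (n - 1) / a n"
  "transfer_matrix a b n lam $ 2 $ 1 = 1"
  "transfer_matrix a b n lam $ 2 $ 2 = 0"
  by (simp_all add: transfer_matrix_def)

lemma lin_mult_coeff:
  fixes u :: "real poly"
  shows "coeff ([:c,1:] * u) (Suc k) = c * coeff u (Suc k) + coeff u k"
  by (simp add: mult_pCons_left)

lemma lin_mult_degree:
  fixes u :: "real poly"
  shows "degree ([:c,1:] * u) \<le> Suc (degree u)"
  using degree_mult_le[of "[:c,1:]" u] by simp

lemma transfer_poly:
  assumes apos: "\<And>n. a n > 0"
  shows "\<exists>u v u' v' :: real poly.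
     (\<forall>lam. transfer_prod a b k lam $ 1 $ 1 = poly u lam \<and> transfer_prod a b k lam $ 1 $ 2 = poly v lam
        \<and> transfer_prod a b k lam $ 2 $ 1 = poly u' lam \<and> transfer_prod a b k lam $ 2 $ 2 = poly v' lam)
     \<and> degree u = k \<and> coeff u k = 1 / (\<Prod>i=1..k. a (int i))
     \<and> (v = 0 \<or> degree v < k) \<and> degree u' \<le> k \<and> degree v' \<le> k \<and> (k = 0 \<or> degree v' < k)"
proof (induction k)
  case 0
  show ?case
    by (rule exI[of _ 1], rule exI[of _ 0], rule exI[of _ 0], rule exI[of _ 1])
       (simp add: mat_def)
next
  case (Suc k)
  then obtain u v u' v' :: "real poly" where
    E: "\<forall>lam. transfer_prod a b k lam $ 1 $ 1 = poly u lam \<and> transfer_prod a b k lam $ 1 $ 2 = poly v lam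
        \<and> transfer_prod a b k lam $ 2 $ 1 = poly u' lam \<and> transfer_prod a b k lam $ 2 $ 2 = poly v' lam"
    and du: "degree u = k" and cu: "coeff u k = 1 / (\<Prod>i=1..k. a (int i))"
    and dv: "v = 0 \<or> degree v < k" and du': "degree u' \<le> k" and dv': "degree v' \<le> k"
    and dv'': "k = 0 \<or> degree v' < k"
    by blast
  define n where "n = int (Suc k)"
  define c where "c = 1 / a n"
  define e where "e = - a (n - 1) / a n"
  define u1 where "u1 = smult c ([:- b n, 1:] * u) + smult e u'"
  define v1 where "v1 = smult c ([:- b n, 1:] * v) + smult e v'"
  have c0: "c \<noteq> 0" using apos[of n] by (simp add: c_def)
  have ent: "transfer_prod a b (Suc k) lam $ 1 $ 1 = poly u1 lam \<and> transfer_prod a b (Suc k) lam $ 1 $ 2 = poly v1 lam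
        \<and> transfer_prod a b (Suc k) lam $ 2 $ 1 = poly u lam \<and> transfer_prod a b (Suc k) lam $ 2 $ 2 = poly v lam" for lam
    using E apos[of "1 + int k"] by (simp add: mm_entries tm_entries u1_def v1_def c_def e_def n_def field_simps)
  have cu1: "coeff u1 (Suc k) = c * coeff u k"
    using du du' by (simp add: u1_def lin_mult_coeff coeff_eq_0)
  have "degree u1 \<le> Suc k"
    unfolding u1_def
    by (rule degree_add_le) (use lin_mult_degree[of "- b n" u] du du' in \<open>auto intro: order.trans[OF degree_smult_le]\<close>)
  moreover have "coeff u1 (Suc k) \<noteq> 0"
    using cu1 c0 du by (simp add: cu) (metis apos less_irrefl prod_pos atLeastAtMost_iff)
  ultimately have du1: "degree u1 = Suc k" by (meson le_antisym le_degree)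
  have "(\<Prod>i=1..Suc k. a (int i)) = a n * (\<Prod>i=1..k. a (int i))"
    by (simp add: n_def prod.nat_ivl_Suc' mult.commute)
  then have cu1': "coeff u1 (Suc k) = 1 / (\<Prod>i=1..Suc k. a (int i))"
    using cu1 cu by (simp add: c_def del: prod.cl_ivl_Suc)
  have dv1: "degree v1 \<le> k"
  proof -
    have "degree (smult c ([:- b n, 1:] * v)) \<le> k"
    proof (cases "v = 0")
      case True then show ?thesis by simp
    next
      case False
      then have "degree v < k" using dv by simp
      then show ?thesis using lin_mult_degree[of "- b n" v]
        by (meson degree_smult_le le_trans Suc_leI)
    qed
    moreover have "degree (smult e v') \<le> k" using dv' by (meson degree_smult_le le_trans)
    ultimately show ?thesis unfolding v1_def by (rule degree_add_le)
  qed
  show ?case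
  proof -
    have A: "\<forall>lam. transfer_prod a b (Suc k) lam $ 1 $ 1 = poly u1 lam \<and> transfer_prod a b (Suc k) lam $ 1 $ 2 = poly v1 lam
        \<and> transfer_prod a b (Suc k) lam $ 2 $ 1 = poly u lam \<and> transfer_prod a b (Suc k) lam $ 2 $ 2 = poly v lam"
      using ent by blast
    have B: "v1 = 0 \<or> degree v1 < Suc k" using dv1 by linarith
    have C: "degree u \<le> Suc k" "degree v \<le> Suc k" "Suc k = 0 \<or> degree v < Suc k"
      using du dv by auto
    show ?thesis using A du1 cu1' B C by (intro exI[of _ u1] exI[of _ v1] exI[of _ u] exI[of _ v]) blast
  qed
qed

lemma disc_poly:
  assumes apos: "\<And>n. a n > 0" and p1: "p \<ge> 1"
  shows "\<exists>q :: real poly. (\<forall>lam. discriminant a b p lam = poly q lam) \<and> degree q = p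
           \<and> coeff q p = 1 / (\<Prod>i=1..p. a (int i))"
proof -
  obtain u v u' v' :: "real poly" where
    E: "\<forall>lam. transfer_prod a b p lam $ 1 $ 1 = poly u lam \<and> transfer_prod a b p lam $ 1 $ 2 = poly v lam
        \<and> transfer_prod a b p lam $ 2 $ 1 = poly u' lam \<and> transfer_prod a b p lam $ 2 $ 2 = poly v' lam"
    and du: "degree u = p" and cu: "coeff u p = 1 / (\<Prod>i=1..p. a (int i))"
    and dv'': "p = 0 \<or> degree v' < p"
    using transfer_poly[where a=a and b=b and k=p, OF apos] by blast
  have dv': "degree v' < degree u" using dv'' p1 du by simp
  show ?thesis
    apply (rule exI[of _ "u + v'"])
    using E du cu dv' by (auto simp: discriminant_def trace2_def sum_2 degree_add_eq_left coeff_eq_0)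
qed

theorem theorem1p3:
  fixes a b :: "int \<Rightarrow> real" and p :: nat and lmin lmax :: "nat \<Rightarrow> real" and d :: real
  assumes hp: "p \<ge> 2"
    and ha_pos: "\<And>n. a n > 0"
    and ha_per: "\<And>n. a (n + int p) = a n"
    and hb_per: "\<And>n. b (n + int p) = b n"
    and hbands: "is_band_decomposition a b p lmin lmax"
    and hd: "d > 0"
    and hgaps: "\<forall>n\<in>{1..<p}. lmin (Suc n) - lmax n \<ge> d"
  shows "inv_logplus (d / (\<Prod>n=1..p. a (int n)) powr (1 / real p))
           \<ge> (\<Sum>n=1..p. inv_logplus (4 * d / (lmax n - lmin n)))"
proof -
  define P where "P = (\<Prod>n=1..p. a (int n))"
  have P0: "P > 0" unfolding P_def by (rule prod_pos) (use ha_pos in auto)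
  define D where "D = discriminant a b p"
  obtain q :: "real poly" where qD: "\<And>lam. D lam = poly q lam" and dq: "degree q = p"
    and cq: "coeff q p = 1 / P"
    using disc_poly[where a=a and b=b and p=p, OF ha_pos] hp unfolding D_def P_def by auto
  have q0: "q \<noteq> 0" using dq hp by auto
  have lq: "lead_coeff q = 1 / P" using dq cq by simp
  from hbands have
    spec: "jacobi_spectrum a b p = (\<Union>n\<in>{1..p}. {lmin n..lmax n})" and
    lt: "\<forall>n\<in>{1..p}. lmin n < lmax n" and
    img: "\<forall>n\<in>{1..p}. D ` {lmin n..lmax n} = {-2..2}"
    unfolding is_band_decomposition_def D_def by auto
  have bound2: "\<bar>D lam\<bar> \<le> 2" if "n \<in> {1..p}" "lam \<in> {lmin n..lmax n}" for n lam
  proof -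
    have "lam \<in> jacobi_spectrum a b p" using spec that by blast
    then show ?thesis by (simp add: jacobi_spectrum_def D_def)
  qed
  have "\<forall>n\<in>{1..p}. \<exists>r. r \<in> {lmin n..lmax n} \<and> D r = 0"
  proof
    fix n assume "n \<in> {1..p}"
    then have "(0::real) \<in> D ` {lmin n..lmax n}" using img by auto
    then show "\<exists>r. r \<in> {lmin n..lmax n} \<and> D r = 0" by force
  qed
  then obtain r where r: "\<And>n. n \<in> {1..p} \<Longrightarrow> r n \<in> {lmin n..lmax n} \<and> D (r n) = 0"
    by metis
  have gap: "lmax n + d \<le> lmin (n + 1 + k)" if "n \<ge> 1" "n + 1 + k \<le> p" for n k
    using that
  proof (induction k)
    case 0 then show ?case using hgaps by force
  next
    case (Suc k)
    then have "lmax n + d \<le> lmin (n + 1 + k)" by simp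
    moreover have "lmin (n + 1 + k) < lmax (n + 1 + k)" using lt Suc.prems by auto
    moreover have "lmax (n + 1 + k) + d \<le> lmin (Suc (n + 1 + k))"
    proof -
      have "n + 1 + k \<in> {1..<p}" using Suc.prems by auto
      then show ?thesis using hgaps by fastforce
    qed
    ultimately show ?case using hd by simp
  qed
  have gap': "lmax n + d \<le> lmin m" if "1 \<le> n" "n < m" "m \<le> p" for n m
    using gap[of n "m - n - 1"] that by simp
  have rinj: "inj_on r {1..p}"
  proof (rule linorder_inj_onI)
    fix n m assume "n < m" "n \<in> {1..p}" "m \<in> {1..p}"
    then have "r n \<le> lmax n" "lmin m \<le> r m" "lmax n + d \<le> lmin m" using r gap' by auto
    then show "r n \<noteq> r m" using hd by linarith
  qed auto
  have Dfac: "D lam = (1 / P) * (\<Prod>n=1..p. lam - r n)" for lam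
  proof -
    have "poly q lam = lead_coeff q * (\<Prod>x\<in>r ` {1..p}. lam - x)"
    proof (rule factor_full)
      show "card (r ` {1..p}) = degree q" using card_image[OF rinj] dq by simp
    qed (use r qD q0 in auto)
    also have "\<dots> = (1 / P) * (\<Prod>n=1..p. lam - r n)"
      using lq prod.reindex[OF rinj, of "\<lambda>x. lam - x"] by (simp add: comp_def)
    finally show ?thesis using qD by simp
  qed
  have key: "\<bar>lam - r m\<bar> * d ^ (p - 1) \<le> 2 * P" if m: "m \<in> {1..p}" and lam: "lam \<in> {lmin m..lmax m}" for m lam
  proof -
    have far: "d \<le> \<bar>lam - r n\<bar>" if "n \<in> {1..p} - {m}" for n
    proof (cases "n < m")
      case True
      then have "r n \<le> lmax n" "lmax n + d \<le> lmin m" using r gap' that m by auto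
      then show ?thesis using lam by auto
    next
      case False
      then have "m < n" using that by auto
      then have "lmin n \<le> r n" "lmax m + d \<le> lmin n" using r gap' that m by auto
      then show ?thesis using lam by auto
    qed
    have "d ^ (p - 1) = (\<Prod>n\<in>{1..p} - {m}. d)" using m by simp
    also have "\<dots> \<le> (\<Prod>n\<in>{1..p} - {m}. \<bar>lam - r n\<bar>)"
      by (rule prod_mono) (use far hd in auto)
    finally have dp: "d ^ (p - 1) \<le> (\<Prod>n\<in>{1..p} - {m}. \<bar>lam - r n\<bar>)" .
    have "\<bar>\<Prod>n=1..p. lam - r n\<bar> = \<bar>lam - r m\<bar> * (\<Prod>n\<in>{1..p} - {m}. \<bar>lam - r n\<bar>)"
      using m by (simp add: prod.remove abs_mult flip: abs_prod)
    also have "\<dots> \<ge> \<bar>lam - r m\<bar> * d ^ (p - 1)"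
      using dp by (simp add: mult_left_mono)
    finally have "\<bar>lam - r m\<bar> * d ^ (p - 1) \<le> \<bar>\<Prod>n=1..p. lam - r n\<bar>" .
    moreover have "\<bar>\<Prod>n=1..p. lam - r n\<bar> = P * \<bar>D lam\<bar>"
      using Dfac P0 by (simp add: abs_mult)
    moreover have "P * \<bar>D lam\<bar> \<le> P * 2" using bound2[OF m lam] P0 by simp
    ultimately show ?thesis by linarith
  qed
  have len: "(lmax m - lmin m) * d ^ (p - 1) \<le> 4 * P" if m: "m \<in> {1..p}" for m
  proof -
    have rm: "r m \<in> {lmin m..lmax m}" using r m by auto
    have "lmin m < lmax m" using lt m by blast
    then have l: "lmin m \<in> {lmin m..lmax m}" "lmax m \<in> {lmin m..lmax m}" by auto
    have "\<bar>lmin m - r m\<bar> * d ^ (p - 1) \<le> 2 * P" "\<bar>lmax m - r m\<bar> * d ^ (p - 1) \<le> 2 * P"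
      using key[OF m l(1)] key[OF m l(2)] by auto
    moreover have "lmax m - lmin m = \<bar>lmin m - r m\<bar> + \<bar>lmax m - r m\<bar>" using rm by auto
    then have "(lmax m - lmin m) * d ^ (p - 1) = \<bar>lmin m - r m\<bar> * d ^ (p - 1) + \<bar>lmax m - r m\<bar> * d ^ (p - 1)"
      by (simp only: distrib_right)
    ultimately show ?thesis by linarith
  qed
  define X where "X = d / P powr (1 / real p)"
  have pr: "real p > 0" using hp by simp
  have lnX: "ln X = ln d - ln P / real p"
    using hd P0 by (simp add: X_def ln_div)
  have lnterm: "real p * ln X \<le> ln (4 * d / (lmax m - lmin m))" if m: "m \<in> {1..p}" for m
  proof -
    have l0: "lmax m - lmin m > 0" using lt m by auto
    have "ln ((lmax m - lmin m) * d ^ (p - 1)) \<le> ln (4 * P)"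
      using len[OF m] l0 hd P0 by (subst ln_le_cancel_iff) auto
    then have "ln (lmax m - lmin m) + real (p - 1) * ln d \<le> ln 4 + ln P"
      using l0 hd P0 by (simp add: ln_mult ln_realpow)
    moreover have "ln (4 * d / (lmax m - lmin m)) = ln 4 + ln d - ln (lmax m - lmin m)"
      using l0 hd by (simp add: ln_div ln_mult)
    moreover have "real p * ln X = real p * ln d - ln P" using lnX pr by (simp add: field_simps)
    moreover have "real (p - 1) = real p - 1" using hp by simp
    ultimately show ?thesis by (simp add: algebra_simps)
  qed
  show ?thesis
  proof (cases "ln X > 0")
    case False
    then have "inv_logplus X = \<infinity>" by (simp add: inv_logplus_def max_def)
    then have "inv_logplus X \<ge> (\<Sum>n=1..p. inv_logplus (4 * d / (lmax n - lmin n)))" by simp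
    then show ?thesis by (simp only: X_def P_def)
  next
    case True
    have tm: "inv_logplus (4 * d / (lmax m - lmin m)) \<le> ereal (1 / (real p * ln X))" if m: "m \<in> {1..p}" for m
    proof -
      have h: "real p * ln X \<le> ln (4 * d / (lmax m - lmin m))" by (rule lnterm[OF m])
      have "real p * ln X > 0" using True pr by simp
      then have "inv_logplus (4 * d / (lmax m - lmin m)) = ereal (1 / ln (4 * d / (lmax m - lmin m)))"
        using h by (simp add: inv_logplus_def max_def)
      also have "\<dots> \<le> ereal (1 / (real p * ln X))"
      proof -
        have "1 / ln (4 * d / (lmax m - lmin m)) \<le> 1 / (real p * ln X)"
          by (rule divide_left_mono) (use h \<open>real p * ln X > 0\<close> in auto)
        then show ?thesis by (simp only: ereal_less_eq(3))
      qed
      finally show ?thesis .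
    qed
    have "(\<Sum>n=1..p. inv_logplus (4 * d / (lmax n - lmin n))) \<le> (\<Sum>n=1..p. ereal (1 / (real p * ln X)))"
      by (rule sum_mono) (rule tm)
    also have "\<dots> = ereal (1 / ln X)" using pr by simp
    also have "\<dots> = inv_logplus X" using True by (simp add: inv_logplus_def max_def)
    finally have "(\<Sum>n=1..p. inv_logplus (4 * d / (lmax n - lmin n))) \<le> inv_logplus X" .
    then show ?thesis by (simp only: X_def P_def)
  qed
qed

end
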